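(* Let $F$ be a finite abelian group. Then: (i) $A_F(G_F)\subseteq C_F:=\big\{|F|-4k\mid k=0,\ldots,\lfloor |F|/2\rfloor\big\}^F\cap\mathbb R^F_{\rm ev}$, and $|F|\,\mathbf 1_F\in A_F(G_F)$, where $\mathbf 1_F$ is the constant function $1$; (ii) in general $A_F(G_F)$ is not a convex subset of $C_F$: there exists a finite abelian group $F$ for which $A_F(G_F)$ is not convex; (iii) for every $g\in\mathrm{Aut}(F)$ one has $A_F\circ\Psi^{(G)}_g=\Psi^{(\rm ev)}_g\circ A_F$, and $A_F(G_F)$ is invariant under $\Psi^{(\rm ev)}_g$.
   Context: $F$ is a finite abelian group (additive), $G_F=\{-1,1\}^F$, and $A_F:G_F\to\mathbb Z^F$ is $A_F(\sigma)_f=\sum_{\ell\in F}\sigma_\ell\sigma_{\ell+f}$. $\mathbb R^F_{\rm ev}=\{h\in\mathbb R^F: h_{-f}=h_f\ \forall f\}$. A subset $S\subseteq C_F$ is called convex if whenever $s_0,s_1\in S$, $t\in(0,1)$ and $s_t:=(1-t)s_0+ts_1\in C_F$, then $s_t\in S$. For $g\in\mathrm{Aut}(F)$ define $\Psi^{(G)}_g:G_F\to G_F$, $\Psi^{(G)}_g(\sigma)_f=\sigma_{g^{-1}(f)}$, and $\Psi^{(\rm ev)}_g:\mathbb R^F_{\rm ev}\to\mathbb R^F_{\rm ev}$, $\Psi^{(\rm ev)}_g(h)_f=h_{g^{-1}(f)}$. *)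

theory Defs
  imports "HOL-Algebra.Algebra"
begin

text \<open>The finite abelian group F is a commutative group G in the HOL-Algebra sense
(written multiplicatively: the group operation of G plays the role of + in F,
inverse plays the role of negation).\<close>

definition sigmas :: "('a, 'b) monoid_scheme \<Rightarrow> ('a \<Rightarrow> real) set"
  where "sigmas G = carrier G \<rightarrow>\<^sub>E {-1, 1}"

definition autocorr :: "('a, 'b) monoid_scheme \<Rightarrow> ('a \<Rightarrow> real) \<Rightarrow> ('a \<Rightarrow> real)"
  where "autocorr G \<sigma> = (\<lambda>f\<in>carrier G. \<Sum>l\<in>carrier G. \<sigma> l * \<sigma> (l \<otimes>\<^bsub>G\<^esub> f))"

definition even_funs :: "('a, 'b) monoid_scheme \<Rightarrow> ('a \<Rightarrow> real) set"
  where "even_funs G = {h \<in> carrier G \<rightarrow>\<^sub>E UNIV. \<forall>f\<in>carrier G. h (inv\<^bsub>G\<^esub> f) = h f}"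

definition C_set :: "('a, 'b) monoid_scheme \<Rightarrow> ('a \<Rightarrow> real) set"
  where "C_set G = (carrier G \<rightarrow>\<^sub>E
      {real (card (carrier G)) - 4 * real k | k. k \<le> card (carrier G) div 2}) \<inter> even_funs G"

definition convex_comb :: "('a, 'b) monoid_scheme \<Rightarrow> real \<Rightarrow> ('a \<Rightarrow> real) \<Rightarrow> ('a \<Rightarrow> real) \<Rightarrow> ('a \<Rightarrow> real)"
  where "convex_comb G t s0 s1 = (\<lambda>f\<in>carrier G. (1 - t) * s0 f + t * s1 f)"

definition convex_in :: "('a, 'b) monoid_scheme \<Rightarrow> ('a \<Rightarrow> real) set \<Rightarrow> ('a \<Rightarrow> real) set \<Rightarrow> bool"
  where "convex_in G C S \<longleftrightarrow> (\<forall>s0\<in>S. \<forall>s1\<in>S. \<forall>t::real. 0 < t \<and> t < 1 \<longrightarrow>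
            convex_comb G t s0 s1 \<in> C \<longrightarrow> convex_comb G t s0 s1 \<in> S)"

definition Psi :: "('a, 'b) monoid_scheme \<Rightarrow> ('a \<Rightarrow> 'a) \<Rightarrow> ('a \<Rightarrow> real) \<Rightarrow> ('a \<Rightarrow> real)"
  where "Psi G g h = (\<lambda>f\<in>carrier G. h (inv_into (carrier G) g f))"

end

theory Submission
  imports Defs
begin

lemma (in group) bij_multc:
  assumes c: "c \<in> carrier G"
  shows "bij_betw (\<lambda>x. x \<otimes> c) (carrier G) (carrier G)"
proof -
  have "(\<lambda>x. x \<otimes> c) ` carrier G = carrier G"
  proof
    show "(\<lambda>x. x \<otimes> c) ` carrier G \<subseteq> carrier G" using c by auto
    show "carrier G \<subseteq> (\<lambda>x. x \<otimes> c) ` carrier G"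
    proof
      fix y assume y: "y \<in> carrier G"
      hence "y = (y \<otimes> inv c) \<otimes> c" using c by (simp add: m_assoc)
      thus "y \<in> (\<lambda>x. x \<otimes> c) ` carrier G" using y c by blast
    qed
  qed
  thus ?thesis using inj_on_multc[OF c] by (simp add: bij_betw_def)
qed

lemma (in group) sum_multc:
  "c \<in> carrier G \<Longrightarrow> (\<Sum>l\<in>carrier G. h (l \<otimes> c)) = (\<Sum>l\<in>carrier G. h l)"
  by (rule sum.reindex_bij_betw[OF bij_multc])

lemma (in group) prod_multc:
  "c \<in> carrier G \<Longrightarrow> (\<Prod>l\<in>carrier G. h (l \<otimes> c)) = (\<Prod>l\<in>carrier G. h l)"
  by (rule prod.reindex_bij_betw[OF bij_multc])

lemma sig_val: "\<sigma> \<in> sigmas G \<Longrightarrow> l \<in> carrier G \<Longrightarrow> \<sigma> l = -1 \<or> \<sigma> l = 1"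
  unfolding sigmas_def by auto

lemma (in comm_group) autocorr_val:
  assumes fin: "finite (carrier G)" and s: "\<sigma> \<in> sigmas G" and f: "f \<in> carrier G"
  shows "autocorr G \<sigma> f \<in> {real (card (carrier G)) - 4 * real k | k. k \<le> card (carrier G) div 2}"
proof -
  let ?P = "\<lambda>l. \<sigma> l \<noteq> \<sigma> (l \<otimes> f)"
  define D where "D = carrier G \<inter> {l. ?P l}"
  have tm: "\<sigma> l * \<sigma> (l \<otimes> f) = (if ?P l then -1 else 1)" if l: "l \<in> carrier G" for l
    using sig_val[OF s l] sig_val[OF s, of "l \<otimes> f"] l f by auto
  have Dsub: "D \<subseteq> carrier G" unfolding D_def by auto
  have cD: "carrier G \<inter> - {l. ?P l} = carrier G - D" unfolding D_def by auto
  have "(\<Sum>l\<in>carrier G. \<sigma> l * \<sigma> (l \<otimes> f)) = (\<Sum>l\<in>carrier G. (if ?P l then -1 else 1::real))"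
    using tm by (rule sum.cong[OF refl])
  also have "\<dots> = - real (card D) + real (card (carrier G - D))"
    using sum.If_cases[OF fin, of ?P "\<lambda>_. -1::real" "\<lambda>_. 1"] cD unfolding D_def by simp
  also have "\<dots> = real (card (carrier G)) - 2 * real (card D)"
    using card_Diff_subset[OF finite_subset[OF Dsub fin] Dsub] card_mono[OF fin Dsub] by simp
  finally have sumeq: "autocorr G \<sigma> f = real (card (carrier G)) - 2 * real (card D)"
    using f by (simp add: autocorr_def)
  have "(\<Prod>l\<in>carrier G. \<sigma> l * \<sigma> (l \<otimes> f)) = (\<Prod>l\<in>carrier G. \<sigma> l) * (\<Prod>l\<in>carrier G. \<sigma> (l \<otimes> f))"
    by (rule prod.distrib)
  also have "\<dots> = (\<Prod>l\<in>carrier G. \<sigma> l * \<sigma> l)"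
    by (simp add: prod_multc[OF f] prod.distrib)
  also have "\<dots> = (\<Prod>l\<in>carrier G. 1)"
    by (rule prod.cong[OF refl]) (use sig_val[OF s] in fastforce)
  finally have p1: "(\<Prod>l\<in>carrier G. \<sigma> l * \<sigma> (l \<otimes> f)) = 1" by simp
  have "(\<Prod>l\<in>carrier G. \<sigma> l * \<sigma> (l \<otimes> f)) = (\<Prod>l\<in>carrier G. (if ?P l then -1 else 1::real))"
    using tm by (rule prod.cong[OF refl])
  also have "\<dots> = (-1) ^ card D"
    using prod.If_cases[OF fin, of ?P "\<lambda>_. -1::real" "\<lambda>_. 1"] cD unfolding D_def by simp
  finally have "(-1::real) ^ card D = 1" using p1 by simp
  hence ev: "even (card D)" using neg_one_odd_power[of "card D", where 'a=real] by force
  then obtain k where k: "card D = 2 * k" by blast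
  have "card D \<le> card (carrier G)" by (rule card_mono[OF fin Dsub])
  hence "k \<le> card (carrier G) div 2" using k by simp
  moreover have "autocorr G \<sigma> f = real (card (carrier G)) - 4 * real k" using sumeq k by simp
  ultimately show ?thesis by blast
qed

lemma (in comm_group) autocorr_even:
  assumes s: "\<sigma> \<in> sigmas G" and f: "f \<in> carrier G"
  shows "autocorr G \<sigma> (inv f) = autocorr G \<sigma> f"
proof -
  have "(\<Sum>l\<in>carrier G. \<sigma> l * \<sigma> (l \<otimes> inv f)) =
        (\<Sum>l\<in>carrier G. \<sigma> (l \<otimes> f) * \<sigma> ((l \<otimes> f) \<otimes> inv f))"
    by (rule sum_multc[OF f, symmetric])
  also have "\<dots> = (\<Sum>l\<in>carrier G. \<sigma> l * \<sigma> (l \<otimes> f))"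
    by (rule sum.cong[OF refl]) (use f in \<open>simp add: m_assoc mult.commute\<close>)
  finally show ?thesis using f by (simp add: autocorr_def)
qed

lemma (in comm_group) part1:
  assumes fin: "finite (carrier G)"
  shows "autocorr G ` sigmas G \<subseteq> C_set G \<and>
            (\<lambda>f\<in>carrier G. real (card (carrier G))) \<in> autocorr G ` sigmas G"
proof
  show "autocorr G ` sigmas G \<subseteq> C_set G"
  proof
    fix h assume "h \<in> autocorr G ` sigmas G"
    then obtain \<sigma> where s: "\<sigma> \<in> sigmas G" and h: "h = autocorr G \<sigma>" by blast
    have "h \<in> carrier G \<rightarrow>\<^sub>E {real (card (carrier G)) - 4 * real k | k. k \<le> card (carrier G) div 2}"
      using autocorr_val[OF fin s] unfolding h by (auto simp: autocorr_def)
    moreover have "h \<in> even_funs G"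
      unfolding even_funs_def h using autocorr_even[OF s] by (auto simp: autocorr_def)
    ultimately show "h \<in> C_set G" unfolding C_set_def by blast
  qed
  let ?one = "\<lambda>x\<in>carrier G. 1::real"
  have "?one \<in> sigmas G" unfolding sigmas_def by auto
  moreover have "autocorr G ?one = (\<lambda>f\<in>carrier G. real (card (carrier G)))"
    unfolding autocorr_def by (rule ext) auto
  ultimately show "(\<lambda>f\<in>carrier G. real (card (carrier G))) \<in> autocorr G ` sigmas G"
    by (metis image_eqI)
qed


definition Z4 :: "nat monoid" where
  "Z4 = \<lparr>carrier = {0,1,2,3}, monoid.mult = (\<lambda>a b. (a + b) mod 4), one = 0\<rparr>"

lemma Z4_carrier: "x \<in> carrier Z4 \<longleftrightarrow> x = 0 \<or> x = 1 \<or> x = 2 \<or> x = 3"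
  by (auto simp: Z4_def)

lemma Z4_group: "comm_group Z4"
proof (rule comm_groupI)
  fix x y z assume "x \<in> carrier Z4" "y \<in> carrier Z4" "z \<in> carrier Z4"
  thus "x \<otimes>\<^bsub>Z4\<^esub> y \<otimes>\<^bsub>Z4\<^esub> z = x \<otimes>\<^bsub>Z4\<^esub> (y \<otimes>\<^bsub>Z4\<^esub> z)"
    unfolding Z4_carrier by (auto simp: Z4_def)
next
  fix x y assume "x \<in> carrier Z4" "y \<in> carrier Z4"
  thus "x \<otimes>\<^bsub>Z4\<^esub> y \<in> carrier Z4" "x \<otimes>\<^bsub>Z4\<^esub> y = y \<otimes>\<^bsub>Z4\<^esub> x"
    unfolding Z4_carrier by (auto simp: Z4_def)
next
  show "\<one>\<^bsub>Z4\<^esub> \<in> carrier Z4" by (simp add: Z4_def)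
next
  fix x assume "x \<in> carrier Z4"
  thus "\<one>\<^bsub>Z4\<^esub> \<otimes>\<^bsub>Z4\<^esub> x = x" unfolding Z4_carrier by (auto simp: Z4_def)
  show "\<exists>y\<in>carrier Z4. y \<otimes>\<^bsub>Z4\<^esub> x = \<one>\<^bsub>Z4\<^esub>"
  proof (rule bexI[of _ "(4 - x) mod 4"])
    show "(4 - x) mod 4 \<otimes>\<^bsub>Z4\<^esub> x = \<one>\<^bsub>Z4\<^esub>" "(4 - x) mod 4 \<in> carrier Z4"
      using \<open>x \<in> carrier Z4\<close> unfolding Z4_carrier by (auto simp: Z4_def)
  qed
qed

lemma Z4_inv: "x \<in> carrier Z4 \<Longrightarrow> inv\<^bsub>Z4\<^esub> x = (4 - x) mod 4"
proof -
  assume x: "x \<in> carrier Z4"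
  interpret comm_group Z4 by (rule Z4_group)
  show ?thesis
    by (rule inv_equality) (use x in \<open>auto simp: Z4_carrier, auto simp: Z4_def\<close>)
qed

lemma part2: "\<exists>F :: nat monoid. comm_group F \<and> finite (carrier F) \<and>
            \<not> convex_in F (C_set F) (autocorr F ` sigmas F)"
proof (intro exI conjI)
  show "comm_group Z4" by (rule Z4_group)
  show "finite (carrier Z4)" by (simp add: Z4_def)
  let ?s0 = "\<lambda>x\<in>carrier Z4. 1::real"
  let ?s1 = "\<lambda>x\<in>carrier Z4. if even x then 1 else -1::real"
  let ?c = "\<lambda>f\<in>carrier Z4. if even f then 4 else 0::real"
  have s0: "?s0 \<in> sigmas Z4" and s1: "?s1 \<in> sigmas Z4" unfolding sigmas_def by auto
  have cc: "convex_comb Z4 (1/2) (autocorr Z4 ?s0) (autocorr Z4 ?s1) = ?c"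
    unfolding convex_comb_def autocorr_def
    by (rule ext) (auto simp: Z4_def)
  have cardZ: "card (carrier Z4) = 4" by (simp add: Z4_def)
  have cC: "?c \<in> C_set Z4"
  proof -
    have "?c \<in> carrier Z4 \<rightarrow>\<^sub>E {real (card (carrier Z4)) - 4 * real k | k. k \<le> card (carrier Z4) div 2}"
    proof
      fix f assume "f \<in> carrier Z4"
      show "?c f \<in> {real (card (carrier Z4)) - 4 * real k | k. k \<le> card (carrier Z4) div 2}"
      proof (cases "even f")
        case True thus ?thesis using \<open>f \<in> carrier Z4\<close> cardZ by (auto intro!: exI[of _ 0])
      next
        case False thus ?thesis using \<open>f \<in> carrier Z4\<close> cardZ by (auto intro!: exI[of _ 1])
      qed
    qed auto
    moreover have "?c \<in> even_funs Z4"
      unfolding even_funs_def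
    proof (intro CollectI conjI ballI)
      fix f assume f: "f \<in> carrier Z4"
      have "inv\<^bsub>Z4\<^esub> f \<in> carrier Z4"
        using Z4_group f by (simp add: group.inv_closed comm_group.axioms(2))
      thus "?c (inv\<^bsub>Z4\<^esub> f) = ?c f" using f unfolding Z4_inv[OF f]
        by (auto simp: Z4_carrier)
    qed auto
    ultimately show ?thesis unfolding C_set_def by blast
  qed
  have nin: "?c \<notin> autocorr Z4 ` sigmas Z4"
  proof
    assume "?c \<in> autocorr Z4 ` sigmas Z4"
    then obtain \<sigma> where s: "\<sigma> \<in> sigmas Z4" and e: "?c = autocorr Z4 \<sigma>" by blast
    have v: "\<sigma> i = -1 \<or> \<sigma> i = 1" if "i \<in> {0,1,2,3}" for i
      using sig_val[OF s, of i] that by (simp add: Z4_def)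
    have e1: "?c 1 = autocorr Z4 \<sigma> 1" and e2: "?c 2 = autocorr Z4 \<sigma> 2" using e by auto
    have a1: "\<sigma> 0 * \<sigma> 1 + (\<sigma> 1 * \<sigma> 2 + (\<sigma> 2 * \<sigma> 3 + \<sigma> 3 * \<sigma> 0)) = 0"
      using e1 by (simp add: autocorr_def Z4_def) (simp add: eval_nat_numeral)
    have a2: "\<sigma> 0 * \<sigma> 2 + (\<sigma> 1 * \<sigma> 3 + (\<sigma> 2 * \<sigma> 0 + \<sigma> 3 * \<sigma> 1)) = 4"
      using e2 by (simp add: autocorr_def Z4_def)
    show False using v[of 0] v[of 1] v[of 2] v[of 3] a1 a2 by auto
  qed
  show "\<not> convex_in Z4 (C_set Z4) (autocorr Z4 ` sigmas Z4)"
  proof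
    assume "convex_in Z4 (C_set Z4) (autocorr Z4 ` sigmas Z4)"
    hence H: "\<And>a b t. a \<in> autocorr Z4 ` sigmas Z4 \<Longrightarrow> b \<in> autocorr Z4 ` sigmas Z4 \<Longrightarrow>
       0 < t \<Longrightarrow> t < 1 \<Longrightarrow> convex_comb Z4 t a b \<in> C_set Z4 \<Longrightarrow>
       convex_comb Z4 t a b \<in> autocorr Z4 ` sigmas Z4"
      unfolding convex_in_def by blast
    have "convex_comb Z4 (1/2) (autocorr Z4 ?s0) (autocorr Z4 ?s1) \<in> autocorr Z4 ` sigmas Z4"
      by (rule H) (use s0 s1 cc cC in auto)
    thus False using cc cC nin by simp
  qed
qed


lemma (in group) part3:
  assumes g: "g \<in> iso G G"
  shows "(\<forall>\<sigma>\<in>sigmas G. autocorr G (Psi G g \<sigma>) = Psi G g (autocorr G \<sigma>)) \<and>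
         Psi G g ` (autocorr G ` sigmas G) = autocorr G ` sigmas G"
proof -
  define h where "h = inv_into (carrier G) g"
  have hiso: "h \<in> iso G G" unfolding h_def by (rule iso_set_sym[OF g])
  have hbij: "bij_betw h (carrier G) (carrier G)" using hiso by (simp add: iso_def)
  have hc: "h x \<in> carrier G" if "x \<in> carrier G" for x using hbij that by (meson bij_betwE)
  have hm: "h (x \<otimes> y) = h x \<otimes> h y" if "x \<in> carrier G" "y \<in> carrier G" for x y
    using hiso that by (simp add: iso_def hom_def)
  have gbij: "bij_betw g (carrier G) (carrier G)" using g by (simp add: iso_def)
  have gc: "g x \<in> carrier G" if "x \<in> carrier G" for x using gbij that by (meson bij_betwE)
  have gh: "g (h x) = x" if "x \<in> carrier G" for x
    unfolding h_def using gbij that by (meson bij_betw_inv_into_right)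
  have Psi_eq: "Psi G g \<sigma> = (\<lambda>f\<in>carrier G. \<sigma> (h f))" for \<sigma> by (simp add: Psi_def h_def)
  have comm: "autocorr G (Psi G g \<sigma>) = Psi G g (autocorr G \<sigma>)" for \<sigma>
  proof (rule ext)
    fix f show "autocorr G (Psi G g \<sigma>) f = Psi G g (autocorr G \<sigma>) f"
    proof (cases "f \<in> carrier G")
      case True
      have "autocorr G (Psi G g \<sigma>) f = (\<Sum>l\<in>carrier G. \<sigma> (h l) * \<sigma> (h l \<otimes> h f))"
        using True hm by (simp add: autocorr_def Psi_eq)
      also have "\<dots> = (\<Sum>l\<in>carrier G. \<sigma> l * \<sigma> (l \<otimes> h f))"
        by (rule sum.reindex_bij_betw[OF hbij])
      also have "\<dots> = Psi G g (autocorr G \<sigma>) f"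
        using True hc by (simp add: autocorr_def Psi_eq)
      finally show ?thesis .
    next
      case False thus ?thesis by (simp add: autocorr_def Psi_def)
    qed
  qed
  have Psi_sig: "Psi G g \<sigma> \<in> sigmas G" if "\<sigma> \<in> sigmas G" for \<sigma>
    using that hc unfolding sigmas_def Psi_eq by auto
  have "Psi G g ` (autocorr G ` sigmas G) = autocorr G ` sigmas G"
  proof
    show "Psi G g ` autocorr G ` sigmas G \<subseteq> autocorr G ` sigmas G"
    proof
      fix a assume "a \<in> Psi G g ` autocorr G ` sigmas G"
      then obtain \<sigma> where s: "\<sigma> \<in> sigmas G" and a: "a = Psi G g (autocorr G \<sigma>)" by blast
      have "a = autocorr G (Psi G g \<sigma>)" using a comm by simp
      thus "a \<in> autocorr G ` sigmas G" using Psi_sig[OF s] by blast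
    qed
    show "autocorr G ` sigmas G \<subseteq> Psi G g ` autocorr G ` sigmas G"
    proof
      fix a assume "a \<in> autocorr G ` sigmas G"
      then obtain \<sigma> where s: "\<sigma> \<in> sigmas G" and a: "a = autocorr G \<sigma>" by blast
      define \<tau> where "\<tau> = (\<lambda>x\<in>carrier G. \<sigma> (g x))"
      have ts: "\<tau> \<in> sigmas G" using s gc unfolding sigmas_def \<tau>_def by auto
      have "Psi G g \<tau> = \<sigma>"
      proof (rule ext)
        fix f show "Psi G g \<tau> f = \<sigma> f"
          using s hc gh unfolding Psi_eq \<tau>_def sigmas_def by (auto simp: PiE_def extensional_def)
      qed
      hence "a = Psi G g (autocorr G \<tau>)" using a comm by metis
      thus "a \<in> Psi G g ` autocorr G ` sigmas G" using ts by blast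
    qed
  qed
  thus ?thesis using comm by blast
qed

theorem mainTheorem4:
  shows "(\<forall>(G :: ('a, 'b) monoid_scheme). comm_group G \<and> finite (carrier G) \<longrightarrow>
            autocorr G ` sigmas G \<subseteq> C_set G \<and>
            (\<lambda>f\<in>carrier G. real (card (carrier G))) \<in> autocorr G ` sigmas G)
    \<and> (\<exists>F :: nat monoid. comm_group F \<and> finite (carrier F) \<and>
            \<not> convex_in F (C_set F) (autocorr F ` sigmas F))
    \<and> (\<forall>(G :: ('a, 'b) monoid_scheme) g. comm_group G \<and> finite (carrier G) \<and> g \<in> iso G G \<longrightarrow>
            (\<forall>\<sigma>\<in>sigmas G. autocorr G (Psi G g \<sigma>) = Psi G g (autocorr G \<sigma>)) \<and>
            Psi G g ` (autocorr G ` sigmas G) = autocorr G ` sigmas G)"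
proof (intro conjI allI impI)
  fix G :: "('a, 'b) monoid_scheme"
  assume a: "comm_group G \<and> finite (carrier G)"
  show "autocorr G ` sigmas G \<subseteq> C_set G"
    using comm_group.part1[of G] a by blast
  show "(\<lambda>f\<in>carrier G. real (card (carrier G))) \<in> autocorr G ` sigmas G"
    using comm_group.part1[of G] a by blast
next
  show "\<exists>F :: nat monoid. comm_group F \<and> finite (carrier F) \<and>
            \<not> convex_in F (C_set F) (autocorr F ` sigmas F)" by (rule part2)
next
  fix G :: "('a, 'b) monoid_scheme" and g
  assume a: "comm_group G \<and> finite (carrier G) \<and> g \<in> iso G G"
  hence gr: "group G" by (simp add: comm_group.axioms(2))
  show "\<forall>\<sigma>\<in>sigmas G. autocorr G (Psi G g \<sigma>) = Psi G g (autocorr G \<sigma>)"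
    using group.part3[OF gr] a by blast
  show "Psi G g ` (autocorr G ` sigmas G) = autocorr G ` sigmas G"
    using group.part3[OF gr] a by blast
qed

end
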